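(* Let $k\ge1$ and let $a\ge b$ be the dimensions of irreducible algebraic sets $A,B\subset\mathbb{C}^k$; put $m=2k-a-b$. Let $h^*$ and $h_0$ be integers with $b\ge h^*>\dim(A\cap B)$ and $\max(a+b-k,0)\le h_0\le$ the minimum dimension of any irreducible component of $A\cap B$. Let $\mathbb A\in\mathbb{C}^{(a+b)\times k}$, $\mathbf B\in\mathbb{C}^{(a+b)\times k}$, $\mathbf C\in\mathbb{C}^{k\times 2k}$ be generic, set $\mathbf A=[\mathbb A\ \ -\mathbb A]\in\mathbb{C}^{(a+b)\times 2k}$, and for $0\le h\le k$ let $\mathbf Y_h=\mathbf A+\mathbf B\mathbf P_h\mathbf C\in\mathbb{C}^{(a+b)\times 2k}$. Then for any integers $j,i$ with $h_0\le j<i\le h^*$ there exist matrices $E\in\mathbb{C}^{2k\times(m-i+j)}$ and $F,G\in\mathbb{C}^{2k\times(i-j)}$ such that (1) the columns of $[E\ \ F]$ form a basis of the null space of $\mathbf Y_i$; (2) the columns of $[E\ \ G]$ form a basis of the null space of $\mathbf Y_j$; (3) $\mathbf P_{ji}\mathbf C F=\mathbf P_{ji}\mathbf C G$ equals the $k\times(i-j)$ matrix whose rows $j+1,\dots,i$ form the identity matrix $I_{i-j}$ and whose other rows are zero.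
   Context: For $0\le h\le k$, $\mathbf P_h=\mathrm{diag}(1,\dots,1,0,\dots,0)$ is the $k\times k$ diagonal matrix with $h$ ones followed by $k-h$ zeros. For $0\le j\le i\le k$, $\mathbf P_{ji}=\mathrm{diag}(0,\dots,0,1,\dots,1,0,\dots,0)$ is the $k\times k$ diagonal matrix with $j$ zeros, then $i-j$ ones, then $k-i$ zeros (so $\mathbf P_j+\mathbf P_{ji}=\mathbf P_i$). "Generic" means for all choices outside a proper algebraic subset of the parameter space (e.g. random complex entries). *)

theory Defs
  imports "Jordan_Normal_Form.Matrix" "HOL-Library.Nat_Bijection"
begin

inductive poly_fun :: "((nat \<Rightarrow> complex) \<Rightarrow> complex) \<Rightarrow> bool" where
  pf_const: "poly_fun (\<lambda>x. c)"
| pf_var: "poly_fun (\<lambda>x. x i)"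
| pf_add: "poly_fun p \<Longrightarrow> poly_fun q \<Longrightarrow> poly_fun (\<lambda>x. p x + q x)"
| pf_mul: "poly_fun p \<Longrightarrow> poly_fun q \<Longrightarrow> poly_fun (\<lambda>x. p x * q x)"

definition vcoords :: "nat \<Rightarrow> complex vec \<Rightarrow> (nat \<Rightarrow> complex)" where
  "vcoords k v = (\<lambda>i. if i < k then v $ i else 0)"

definition alg_set :: "nat \<Rightarrow> complex vec set \<Rightarrow> bool" where
  "alg_set k S \<longleftrightarrow> (\<exists>P. finite P \<and> (\<forall>p\<in>P. poly_fun p) \<and>
      S = {v \<in> carrier_vec k. \<forall>p\<in>P. p (vcoords k v) = 0})"

definition irreducible_alg :: "nat \<Rightarrow> complex vec set \<Rightarrow> bool" where
  "irreducible_alg k S \<longleftrightarrow> alg_set k S \<and> S \<noteq> {} \<and>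
     (\<forall>S1 S2. alg_set k S1 \<and> alg_set k S2 \<and> S = S1 \<union> S2 \<longrightarrow> S1 = S \<or> S2 = S)"

definition alg_chain :: "nat \<Rightarrow> complex vec set \<Rightarrow> nat \<Rightarrow> bool" where
  "alg_chain k S n \<longleftrightarrow> (\<exists>Z :: nat \<Rightarrow> complex vec set.
      (\<forall>i\<le>n. irreducible_alg k (Z i) \<and> Z i \<subseteq> S) \<and> (\<forall>i<n. Z i \<subset> Z (Suc i)))"

definition alg_dim :: "nat \<Rightarrow> complex vec set \<Rightarrow> int" where
  "alg_dim k S = (if S = {} then -1 else int (Max {n. alg_chain k S n}))"

definition irr_component :: "nat \<Rightarrow> complex vec set \<Rightarrow> complex vec set \<Rightarrow> bool" where
  "irr_component k S Z \<longleftrightarrow> irreducible_alg k Z \<and> Z \<subseteq> S \<and>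
     (\<forall>W. irreducible_alg k W \<and> Z \<subseteq> W \<and> W \<subseteq> S \<longrightarrow> W = Z)"

definition hconcat :: "'a mat \<Rightarrow> 'a mat \<Rightarrow> 'a mat" where
  "hconcat A B = mat (dim_row A) (dim_col A + dim_col B)
     (\<lambda>(r,c). if c < dim_col A then A $$ (r,c) else B $$ (r, c - dim_col A))"

definition P_mat :: "nat \<Rightarrow> nat \<Rightarrow> complex mat" where
  "P_mat k h = mat k k (\<lambda>(r,c). if r = c \<and> r < h then 1 else 0)"

definition P_mat2 :: "nat \<Rightarrow> nat \<Rightarrow> nat \<Rightarrow> complex mat" where
  "P_mat2 k j i = mat k k (\<lambda>(r,c). if r = c \<and> j \<le> r \<and> r < i then 1 else 0)"

text \<open>k x (i-j) matrix whose rows j+1..i (1-based) form the identity, others zero.\<close>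
definition id_block :: "nat \<Rightarrow> nat \<Rightarrow> nat \<Rightarrow> complex mat" where
  "id_block k j i = mat k (i - j) (\<lambda>(r,c). if r = j + c then 1 else 0)"

definition null_basis :: "complex mat \<Rightarrow> complex mat \<Rightarrow> bool" where
  "null_basis Y M \<longleftrightarrow> dim_row M = dim_col Y \<and>
     (\<forall>c \<in> carrier_vec (dim_col M). M *\<^sub>v c = 0\<^sub>v (dim_row M) \<longrightarrow> c = 0\<^sub>v (dim_col M)) \<and>
     (\<forall>v \<in> carrier_vec (dim_col Y). Y *\<^sub>v v = 0\<^sub>v (dim_row Y) \<longleftrightarrow>
         (\<exists>c \<in> carrier_vec (dim_col M). v = M *\<^sub>v c))"

definition mcoord :: "complex mat \<Rightarrow> nat \<Rightarrow> complex" where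
  "mcoord M n = (case prod_decode n of (r,c) \<Rightarrow>
      if r < dim_row M \<and> c < dim_col M then M $$ (r,c) else 0)"

definition coords3 :: "complex mat \<Rightarrow> complex mat \<Rightarrow> complex mat \<Rightarrow> nat \<Rightarrow> complex" where
  "coords3 M1 M2 M3 n = (case prod_decode n of (t, rc) \<Rightarrow>
      if t = 0 then mcoord M1 rc else if t = 1 then mcoord M2 rc
      else if t = 2 then mcoord M3 rc else 0)"

text \<open>A property holds for generic (M1,M2,M3) in the parameter space
  C^(r1 x c1) x C^(r2 x c2) x C^(r3 x c3): outside a proper algebraic subset,
  i.e. whenever some polynomial in the entries, not vanishing identically on the
  parameter space, is nonzero.\<close>
definition generic3 :: "nat \<Rightarrow> nat \<Rightarrow> nat \<Rightarrow> nat \<Rightarrow> nat \<Rightarrow> nat \<Rightarrow>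
    (complex mat \<Rightarrow> complex mat \<Rightarrow> complex mat \<Rightarrow> bool) \<Rightarrow> bool" where
  "generic3 r1 c1 r2 c2 r3 c3 Q \<longleftrightarrow> (\<exists>p. poly_fun p \<and>
     (\<exists>M1 \<in> carrier_mat r1 c1. \<exists>M2 \<in> carrier_mat r2 c2. \<exists>M3 \<in> carrier_mat r3 c3.
        p (coords3 M1 M2 M3) \<noteq> 0) \<and>
     (\<forall>M1 \<in> carrier_mat r1 c1. \<forall>M2 \<in> carrier_mat r2 c2. \<forall>M3 \<in> carrier_mat r3 c3.
        p (coords3 M1 M2 M3) \<noteq> 0 \<longrightarrow> Q M1 M2 M3))"

end

theory Submission imports Defs "Jordan_Normal_Form.Determinant" begin

lemma pf_sum: "finite S \<Longrightarrow> (\<forall>a\<in>S. poly_fun (f a)) \<Longrightarrow> poly_fun (\<lambda>x. \<Sum>a\<in>S. f a x)"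
proof (induction S rule: finite_induct)
  case empty then show ?case by (simp add: pf_const)
next
  case (insert a S) then show ?case by (simp add: pf_add)
qed

lemma pf_prod: "finite S \<Longrightarrow> (\<forall>a\<in>S. poly_fun (f a)) \<Longrightarrow> poly_fun (\<lambda>x. \<Prod>a\<in>S. f a x)"
proof (induction S rule: finite_induct)
  case empty then show ?case by (simp add: pf_const)
next
  case (insert a S) then show ?case by (simp add: pf_mul)
qed

lemma pf_det:
  assumes "\<And>i j. i < n \<Longrightarrow> j < n \<Longrightarrow> poly_fun (\<lambda>x. f x i j)"
  shows "poly_fun (\<lambda>x. det (mat n n (\<lambda>(i,j). f x i j)))"
proof -
  have "poly_fun (\<lambda>x. \<Sum>p\<in>{p. p permutes {0..<n}}. signof p * (\<Prod>i=0..<n. f x i (p i)))"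
  proof (rule pf_sum)
    show "finite {p. p permutes {0..<n}}" by (rule finite_permutations) simp
    show "\<forall>p\<in>{p. p permutes {0..<n}}. poly_fun (\<lambda>x. signof p * (\<Prod>i = 0..<n. f x i (p i)))"
    proof
      fix p assume "p \<in> {p. p permutes {0..<n}}"
      then have "\<And>i. i < n \<Longrightarrow> p i < n" by (simp add: permutes_in_image)
      then show "poly_fun (\<lambda>x. signof p * (\<Prod>i = 0..<n. f x i (p i)))"
        by (intro pf_mul pf_const pf_prod) (auto intro: assms)
    qed
  qed
  moreover have "det (mat n n (\<lambda>(i,j). f x i j)) = (\<Sum>p\<in>{p. p permutes {0..<n}}. signof p * (\<Prod>i=0..<n. f x i (p i)))" for x
    unfolding det_def
    by (auto intro!: sum.cong prod.cong arg_cong[where f="\<lambda>t. _ * t"] simp: permutes_in_image)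
  ultimately show ?thesis by simp
qed

lemma sum_ind: "(\<Sum>i\<in>{0..<n}. (if (q::nat) = i then (1::'a::comm_semiring_1) else 0) * f i) = (if q < n then f q else 0)"
proof -
  have "(\<Sum>i\<in>{0..<n}. (if (q::nat) = i then (1::'a) else 0) * f i) = (\<Sum>i\<in>{0..<n}. if q = i then f i else 0)"
    by (rule sum.cong) auto
  then show ?thesis by (simp add: sum.delta')
qed

lemma sum_ind': "(\<Sum>i\<in>{0..<n}. f i * (if i = (q::nat) then (1::'a::comm_semiring_1) else 0)) = (if q < n then f q else 0)"
proof -
  have "(\<Sum>i\<in>{0..<n}. f i * (if i = (q::nat) then (1::'a) else 0)) = (\<Sum>i\<in>{0..<n}. if q = i then f i else 0)"
    by (rule sum.cong) auto
  then show ?thesis by (simp add: sum.delta')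
qed

definition Tm :: "nat \<Rightarrow> nat \<Rightarrow> complex mat" where
  "Tm N n = mat N n (\<lambda>(r,c). if r = c then 1 else 0)"
definition Jm :: "nat \<Rightarrow> nat \<Rightarrow> (nat \<Rightarrow> nat) \<Rightarrow> complex mat" where
  "Jm N d pos = mat N d (\<lambda>(r,c). if r = pos c then 1 else 0)"

lemma Tm_carrier[simp]: "Tm N n \<in> carrier_mat N n" by (simp add: Tm_def)
lemma Tm_dims[simp]: "dim_row (Tm N n) = N" "dim_col (Tm N n) = n" by (simp_all add: Tm_def)
lemma Jm_dims[simp]: "dim_row (Jm N d pos) = N" "dim_col (Jm N d pos) = d" by (simp_all add: Jm_def)
lemma Jm_carrier[simp]: "Jm N d pos \<in> carrier_mat N d" by (simp add: Jm_def)

lemma Tm_mult_vec: "w \<in> carrier_vec n \<Longrightarrow> q < N \<Longrightarrow> (Tm N n *\<^sub>v w) $ q = (if q < n then w $ q else 0)"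
  by (auto simp: Tm_def scalar_prod_def row_def sum_ind)

lemma Jm_mult_vec_pos: assumes "y \<in> carrier_vec d" "inj_on pos {0..<d}" "c < d" "pos c < N"
  shows "(Jm N d pos *\<^sub>v y) $ (pos c) = y $ c"
proof -
  have "(Jm N d pos *\<^sub>v y) $ (pos c) = (\<Sum>c'\<in>{0..<d}. (if pos c = pos c' then 1 else 0) * y $ c')"
    using assms by (simp add: Jm_def scalar_prod_def row_def)
  also have "\<dots> = (\<Sum>c'\<in>{0..<d}. if c' = c then y $ c' else 0)"
    using assms(2,3) by (intro sum.cong) (auto dest: inj_onD)
  also have "\<dots> = y $ c" using assms by simp
  finally show ?thesis .
qed

lemma Jm_mult_vec_low: assumes "y \<in> carrier_vec d" "pos ` {0..<d} \<subseteq> {n..}" "q < n" "q < N"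
  shows "(Jm N d pos *\<^sub>v y) $ q = 0"
proof -
  have "(Jm N d pos *\<^sub>v y) $ q = (\<Sum>c'\<in>{0..<d}. (if q = pos c' then 1 else 0) * y $ c')"
    using assms by (simp add: Jm_def scalar_prod_def row_def)
  also have "\<dots> = 0"
    using assms by (intro sum.neutral) force
  finally show ?thesis .
qed

lemma Tm_mult_mat: "X \<in> carrier_mat n p \<Longrightarrow> q < N \<Longrightarrow> c < p \<Longrightarrow>
   (Tm N n * X) $$ (q,c) = (if q < n then X $$ (q,c) else 0)"
  by (auto simp: Tm_def scalar_prod_def row_def col_def sum_ind)

lemma Jm_index: "r < N \<Longrightarrow> c < d \<Longrightarrow> Jm N d pos $$ (r,c) = (if r = pos c then 1 else 0)"
  by (simp add: Jm_def)

lemma kernel_free: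
  fixes Y Z Zinv :: "complex mat"
  assumes Y: "Y \<in> carrier_mat n N" and Zi: "Zinv \<in> carrier_mat n n"
    and YT: "Y * Tm N n = Z" and inv1: "Zinv * Z = 1\<^sub>m n" and inv2: "Z * Zinv = 1\<^sub>m n"
    and injp: "inj_on pos {0..<d}" and imp: "pos ` {0..<d} = {n..<N}"
  shows "null_basis Y (Jm N d pos - Tm N n * (Zinv * (Y * Jm N d pos)))"
proof -
  let ?J = "Jm N d pos" let ?T = "Tm N n"
  define W where "W = Zinv * (Y * ?J)"
  define M where "M = ?J - ?T * W"
  have Z: "Z \<in> carrier_mat n n" using YT Y by auto
  have YJ: "Y * ?J \<in> carrier_mat n d" using Y by auto
  have W: "W \<in> carrier_mat n d" unfolding W_def using Zi Y by auto
  have TW: "?T * W \<in> carrier_mat N d" by (rule mult_carrier_mat[OF Tm_carrier W])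
  have M: "M \<in> carrier_mat N d" unfolding M_def by (rule minus_carrier_mat[OF TW])
  have posN: "pos c < N" and posn: "n \<le> pos c" if "c < d" for c
    using imp that by auto
  have YM: "Y * M = 0\<^sub>m n d"
  proof -
    have "Y * M = Y * ?J - Y * (?T * W)" unfolding M_def
      by (rule mult_minus_distrib_mat[OF Y Jm_carrier TW])
    also have "Y * (?T * W) = (Y * ?T) * W" using assoc_mult_mat[OF Y Tm_carrier W] by simp
    also have "\<dots> = (Z * Zinv) * (Y * ?J)" unfolding W_def YT using assoc_mult_mat[OF Z Zi YJ] by simp
    also have "\<dots> = Y * ?J" using inv2 Y by simp
    finally show ?thesis using YJ by simp
  qed
  have Mv: "M *\<^sub>v c = ?J *\<^sub>v c - ?T *\<^sub>v (W *\<^sub>v c)" if c: "c \<in> carrier_vec d" for c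
  proof -
    have "M *\<^sub>v c = ?J *\<^sub>v c - (?T * W) *\<^sub>v c" unfolding M_def
      by (rule minus_mult_distrib_mat_vec[OF Jm_carrier TW c])
    also have "(?T * W) *\<^sub>v c = ?T *\<^sub>v (W *\<^sub>v c)" using assoc_mult_mat_vec[OF Tm_carrier W c] .
    finally show ?thesis .
  qed
  have indep: "c = 0\<^sub>v d" if c: "c \<in> carrier_vec d" and Mc: "M *\<^sub>v c = 0\<^sub>v N" for c
  proof (rule eq_vecI)
    show "dim_vec c = dim_vec (0\<^sub>v d)" using c by simp
    fix c' assume "c' < dim_vec (0\<^sub>v d)"
    then have c': "c' < d" by simp
    have Wc: "W *\<^sub>v c \<in> carrier_vec n" using W c by simp
    have "(M *\<^sub>v c) $ (pos c') = (?J *\<^sub>v c) $ (pos c') - (?T *\<^sub>v (W *\<^sub>v c)) $ (pos c')"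
      unfolding Mv[OF c] using posN[OF c'] Wc by simp
    also have "\<dots> = c $ c'"
      using Jm_mult_vec_pos[OF c injp c' posN[OF c']] Tm_mult_vec[OF Wc posN[OF c']] posn[OF c'] by simp
    finally show "c $ c' = 0\<^sub>v d $ c'" using Mc posN[OF c'] c' by simp
  qed
  have span: "(Y *\<^sub>v v = 0\<^sub>v n) \<longleftrightarrow> (\<exists>c \<in> carrier_vec d. v = M *\<^sub>v c)" if v: "v \<in> carrier_vec N" for v
  proof
    assume Yv: "Y *\<^sub>v v = 0\<^sub>v n"
    define y where "y = vec d (\<lambda>c. v $ (pos c))"
    define x where "x = vec n (\<lambda>r. v $ r)"
    have y: "y \<in> carrier_vec d" and x: "x \<in> carrier_vec n" unfolding x_def y_def by auto
    have Jy: "?J *\<^sub>v y \<in> carrier_vec N" by (rule mult_mat_vec_carrier[OF Jm_carrier y])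
    have Tx: "?T *\<^sub>v x \<in> carrier_vec N" by (rule mult_mat_vec_carrier[OF Tm_carrier x])
    have posimg: "pos ` {0..<d} \<subseteq> {n..}" using imp by auto
    have veq: "v = ?T *\<^sub>v x + ?J *\<^sub>v y"
    proof (rule eq_vecI)
      show "dim_vec v = dim_vec (?T *\<^sub>v x + ?J *\<^sub>v y)" using v by simp
      fix q assume "q < dim_vec (?T *\<^sub>v x + ?J *\<^sub>v y)"
      then have q: "q < N" by simp
      show "v $ q = (?T *\<^sub>v x + ?J *\<^sub>v y) $ q"
      proof (cases "q < n")
        case True
        then show ?thesis using Tm_mult_vec[OF x q] Jm_mult_vec_low[OF y posimg True q] q
          by (simp add: x_def)
      next
        case False
        then have "q \<in> pos ` {0..<d}" using imp q by auto
        then obtain c' where c': "c' < d" "q = pos c'" by auto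
        then show ?thesis using Tm_mult_vec[OF x q] Jm_mult_vec_pos[OF y injp c'(1) posN[OF c'(1)]] False q
          by (simp add: y_def)
      qed
    qed
    define u where "u = Y *\<^sub>v (?J *\<^sub>v y)"
    have u: "u \<in> carrier_vec n" unfolding u_def by (rule mult_mat_vec_carrier[OF Y Jy])
    have "Y *\<^sub>v v = Y *\<^sub>v (?T *\<^sub>v x) + u" unfolding u_def veq
      by (rule mult_add_distrib_mat_vec[OF Y Tx Jy])
    also have "Y *\<^sub>v (?T *\<^sub>v x) = Z *\<^sub>v x" unfolding YT[symmetric]
      using assoc_mult_mat_vec[OF Y Tm_carrier x] by simp
    finally have h0: "Z *\<^sub>v x + u = 0\<^sub>v n" using Yv by simp
    have Zx: "Z *\<^sub>v x = - u"
    proof (rule eq_vecI)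
      fix i assume "i < dim_vec (- u)" then have i: "i < n" using u by simp
      have "(Z *\<^sub>v x + u) $ i = 0" using h0 i by simp
      then show "(Z *\<^sub>v x) $ i = (- u) $ i" using i u by (simp add: eq_neg_iff_add_eq_0)
    qed (use u Z in simp)
    have "x = (Zinv * Z) *\<^sub>v x" using inv1 x by simp
    also have "\<dots> = Zinv *\<^sub>v (- u)" using assoc_mult_mat_vec[OF Zi Z x] Zx by simp
    also have "\<dots> = - (Zinv *\<^sub>v u)"
    proof (rule eq_vecI)
      fix i assume "i < dim_vec (- (Zinv *\<^sub>v u))" then have i: "i < n" using Zi by simp
      show "(Zinv *\<^sub>v (- u)) $ i = (- (Zinv *\<^sub>v u)) $ i" using i u Zi by simp
    qed (use Zi in simp)
    finally have xeq: "x = - (Zinv *\<^sub>v u)" .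
    have Wy: "W *\<^sub>v y = Zinv *\<^sub>v u" unfolding W_def u_def
      using assoc_mult_mat_vec[OF Zi YJ y] assoc_mult_mat_vec[OF Y Jm_carrier y] by simp
    have "M *\<^sub>v y = v"
    proof (rule eq_vecI)
      show "dim_vec (M *\<^sub>v y) = dim_vec v" using M v by simp
      fix q assume "q < dim_vec v"
      then have q: "q < N" using v by simp
      have Ziu: "Zinv *\<^sub>v u \<in> carrier_vec n" using Zi u by simp
      have "(M *\<^sub>v y) $ q = (?J *\<^sub>v y) $ q - (?T *\<^sub>v (Zinv *\<^sub>v u)) $ q"
        unfolding Mv[OF y] Wy using q by simp
      moreover have "v $ q = (?T *\<^sub>v x) $ q + (?J *\<^sub>v y) $ q"
      proof -
        have "v $ q = (?T *\<^sub>v x + ?J *\<^sub>v y) $ q" using veq by simp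
        also have "\<dots> = (?T *\<^sub>v x) $ q + (?J *\<^sub>v y) $ q" using q by simp
        finally show ?thesis .
      qed
      moreover have "(?T *\<^sub>v x) $ q = - (?T *\<^sub>v (Zinv *\<^sub>v u)) $ q"
      proof -
        have mZ: "- (Zinv *\<^sub>v u) \<in> carrier_vec n" using Ziu by simp
        have dZ: "dim_vec (Zinv *\<^sub>v u) = n" using Zi by simp
        show ?thesis unfolding xeq using Tm_mult_vec[OF Ziu q] Tm_mult_vec[OF mZ q] dZ by simp
      qed
      ultimately show "(M *\<^sub>v y) $ q = v $ q" by simp
    qed
    then show "\<exists>c \<in> carrier_vec d. v = M *\<^sub>v c" using y by auto
  next
    assume "\<exists>c \<in> carrier_vec d. v = M *\<^sub>v c"
    then obtain c where c: "c \<in> carrier_vec d" "v = M *\<^sub>v c" by auto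
    have "Y *\<^sub>v v = (Y * M) *\<^sub>v c" using assoc_mult_mat_vec[OF Y M c(1)] c(2) by simp
    also have "\<dots> = 0\<^sub>v n" unfolding YM
      by (rule eq_vecI) (use c(1) in \<open>auto simp: scalar_prod_def\<close>)
    finally show "Y *\<^sub>v v = 0\<^sub>v n" .
  qed
  have dM: "dim_row M = N" "dim_col M = d" using M by auto
  have dY: "dim_row Y = n" "dim_col Y = N" using Y by auto
  have "null_basis Y M"
    unfolding null_basis_def dM dY
  proof (intro conjI ballI impI)
    show "N = N" by simp
    show "c = 0\<^sub>v d" if "c \<in> carrier_vec d" "M *\<^sub>v c = 0\<^sub>v N" for c
      using indep that .
    show "(Y *\<^sub>v v = 0\<^sub>v n) = (\<exists>c\<in>carrier_vec d. v = M *\<^sub>v c)" if "v \<in> carrier_vec N" for v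
      using span that .
  qed
  then show ?thesis unfolding M_def W_def .
qed


lemma mat_vec_zero: "A \<in> carrier_mat m n \<Longrightarrow> A *\<^sub>v 0\<^sub>v n = 0\<^sub>v m"
  by (intro eq_vecI) auto

lemma null_basis_transfer:
  fixes Yh L Li M :: "complex mat"
  assumes Yh: "Yh \<in> carrier_mat n N" and L: "L \<in> carrier_mat N N" and Li: "Li \<in> carrier_mat N N"
   and LLi: "L * Li = 1\<^sub>m N" and LiL: "Li * L = 1\<^sub>m N" and nb: "null_basis Yh M"
  shows "null_basis (Yh * L) (Li * M)"
proof -
  from nb have dM: "dim_row M = N" using Yh by (simp add: null_basis_def)
  define p where "p = dim_col M"
  have M: "M \<in> carrier_mat N p" using dM p_def by auto
  have ind: "\<And>c. c \<in> carrier_vec p \<Longrightarrow> M *\<^sub>v c = 0\<^sub>v N \<Longrightarrow> c = 0\<^sub>v p"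
    using nb unfolding null_basis_def p_def dM by auto
  have sp: "\<And>v. v \<in> carrier_vec N \<Longrightarrow> (Yh *\<^sub>v v = 0\<^sub>v n) = (\<exists>c\<in>carrier_vec p. v = M *\<^sub>v c)"
    using nb Yh unfolding null_basis_def p_def by auto
  have d1: "dim_row (Li * M) = N" "dim_col (Li * M) = p" "dim_col (Yh * L) = N" "dim_row (Yh * L) = n"
    using Li M L Yh by auto
  show ?thesis unfolding null_basis_def d1
  proof (intro conjI ballI impI)
    show "N = N" by simp
    fix c assume c: "c \<in> carrier_vec p" and h: "(Li * M) *\<^sub>v c = 0\<^sub>v N"
    have Mc: "M *\<^sub>v c \<in> carrier_vec N" using M c by simp
    have "M *\<^sub>v c = (L * Li) *\<^sub>v (M *\<^sub>v c)" using LLi Mc by simp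
    also have "\<dots> = L *\<^sub>v (Li *\<^sub>v (M *\<^sub>v c))" using assoc_mult_mat_vec[OF L Li Mc] .
    also have "Li *\<^sub>v (M *\<^sub>v c) = 0\<^sub>v N" using h assoc_mult_mat_vec[OF Li M c] by simp
    also have "L *\<^sub>v 0\<^sub>v N = 0\<^sub>v N" using mat_vec_zero[OF L] .
    finally show "c = 0\<^sub>v p" using ind c by simp
  next
    fix v :: "complex vec" assume v: "v \<in> carrier_vec N"
    have Lv: "L *\<^sub>v v \<in> carrier_vec N" using L v by simp
    have e1: "(Yh * L) *\<^sub>v v = Yh *\<^sub>v (L *\<^sub>v v)" using assoc_mult_mat_vec[OF Yh L v] .
    show "((Yh * L) *\<^sub>v v = 0\<^sub>v n) = (\<exists>c\<in>carrier_vec p. v = (Li * M) *\<^sub>v c)"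
    proof
      assume "(Yh * L) *\<^sub>v v = 0\<^sub>v n"
      then obtain c where c: "c \<in> carrier_vec p" "L *\<^sub>v v = M *\<^sub>v c" using sp[OF Lv] e1 by auto
      have "v = (Li * L) *\<^sub>v v" using LiL v by simp
      also have "\<dots> = Li *\<^sub>v (M *\<^sub>v c)" using assoc_mult_mat_vec[OF Li L v] c(2) by simp
      also have "\<dots> = (Li * M) *\<^sub>v c" using assoc_mult_mat_vec[OF Li M c(1)] by simp
      finally show "\<exists>c\<in>carrier_vec p. v = (Li * M) *\<^sub>v c" using c(1) by blast
    next
      assume "\<exists>c\<in>carrier_vec p. v = (Li * M) *\<^sub>v c"
      then obtain c where c: "c \<in> carrier_vec p" "v = (Li * M) *\<^sub>v c" by auto
      have Mc: "M *\<^sub>v c \<in> carrier_vec N" using M c by simp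
      have "L *\<^sub>v v = L *\<^sub>v (Li *\<^sub>v (M *\<^sub>v c))" using c assoc_mult_mat_vec[OF Li M c(1)] by simp
      also have "\<dots> = (L * Li) *\<^sub>v (M *\<^sub>v c)" using assoc_mult_mat_vec[OF L Li Mc] by simp
      also have "\<dots> = M *\<^sub>v c" using LLi Mc by simp
      finally have "L *\<^sub>v v = M *\<^sub>v c" .
      then have "Yh *\<^sub>v (L *\<^sub>v v) = 0\<^sub>v n" using sp[OF Lv] c(1) by auto
      then show "(Yh * L) *\<^sub>v v = 0\<^sub>v n" using e1 by simp
    qed
  qed
qed

lemma col_hconcat: "X \<in> carrier_mat N p \<Longrightarrow> X' \<in> carrier_mat N q \<Longrightarrow> c < p + q \<Longrightarrow>
   col (hconcat X X') c = (if c < p then col X c else col X' (c - p))"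
  by (intro eq_vecI) (auto simp: hconcat_def)

lemma hconcat_carrier: "X \<in> carrier_mat N p \<Longrightarrow> X' \<in> carrier_mat N q \<Longrightarrow> hconcat X X' \<in> carrier_mat N (p + q)"
  by (auto simp: hconcat_def)

lemma hconcat_mult:
  assumes A: "A \<in> carrier_mat m N" and X: "X \<in> carrier_mat N p" and X': "X' \<in> carrier_mat N q"
  shows "A * hconcat X X' = hconcat (A * X) (A * X')"
proof (rule eq_matI)
  show "dim_row (A * hconcat X X') = dim_row (hconcat (A * X) (A * X'))" using A by (simp add: hconcat_def)
  show "dim_col (A * hconcat X X') = dim_col (hconcat (A * X) (A * X'))" using A X X' by (simp add: hconcat_def)
  fix r c assume r: "r < dim_row (hconcat (A * X) (A * X'))" and c: "c < dim_col (hconcat (A * X) (A * X'))"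
  then have r': "r < m" and c': "c < p + q" using A X X' by (auto simp: hconcat_def)
  show "(A * hconcat X X') $$ (r, c) = hconcat (A * X) (A * X') $$ (r, c)"
    using r' c' A X X' col_hconcat[OF X X' c'] by (auto simp: hconcat_def)
qed


definition Lm :: "nat \<Rightarrow> complex mat \<Rightarrow> complex mat" where
  "Lm k CC = mat (2*k) (2*k) (\<lambda>(r,c). if r < k then (if c = r then 1 else if c = r + k then -1 else 0)
      else CC $$ (r - k, c))"

definition Yhat :: "nat \<Rightarrow> nat \<Rightarrow> nat \<Rightarrow> complex mat \<Rightarrow> complex mat \<Rightarrow> complex mat" where
  "Yhat n k h AA BB = mat n (2*k) (\<lambda>(r,c). if c < k then AA $$ (r,c)
      else if c - k < h then BB $$ (r, c - k) else 0)"

lemma Lm_dims[simp]: "dim_row (Lm k CC) = 2*k" "dim_col (Lm k CC) = 2*k" by (simp_all add: Lm_def)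
lemma Yhat_dims[simp]: "dim_row (Yhat n k h AA BB) = n" "dim_col (Yhat n k h AA BB) = 2*k" by (simp_all add: Yhat_def)
lemma Lm_carrier[simp]: "Lm k CC \<in> carrier_mat (2*k) (2*k)" by (simp add: Lm_def)
lemma Yhat_carrier[simp]: "Yhat n k h AA BB \<in> carrier_mat n (2*k)" by (simp add: Yhat_def)

lemma sum_split2k: "(\<Sum>q\<in>{0..<2*(k::nat)}. f q) = (\<Sum>q\<in>{0..<k}. f q) + (\<Sum>t\<in>{0..<k}. f (t + k))"
proof -
  have "(\<Sum>q\<in>{0..<2*k}. f q) = (\<Sum>q\<in>{0..<k}. f q) + (\<Sum>q\<in>{k..<2*k}. f q)"
    by (rule sum.atLeastLessThan_concat[symmetric]) auto
  also have "(\<Sum>q\<in>{k..<2*k}. f q) = (\<Sum>t\<in>{0..<k}. f (t + k))"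
    using sum.shift_bounds_nat_ivl[of f 0 k k] by (simp add: mult_2)
  finally show ?thesis .
qed

lemma BP_index: assumes BB: "BB \<in> carrier_mat n k" and r: "r < n" and t: "t < k"
  shows "(BB * P_mat k h) $$ (r, t) = (if t < h then BB $$ (r, t) else 0)"
proof -
  have "(BB * P_mat k h) $$ (r, t) = (\<Sum>s\<in>{0..<k}. BB $$ (r, s) * (if s = t \<and> s < h then 1 else 0))"
    using BB r t by (simp add: P_mat_def scalar_prod_def)
  also have "\<dots> = (\<Sum>s\<in>{0..<k}. if t = s then (if t < h then BB $$ (r, t) else 0) else 0)"
    by (rule sum.cong) auto
  also have "\<dots> = (if t < h then BB $$ (r, t) else 0)" using t by (simp add: sum.delta')
  finally show ?thesis .
qed

lemma Y_factor:
  assumes AA: "AA \<in> carrier_mat n k" and BB: "BB \<in> carrier_mat n k" and CC: "CC \<in> carrier_mat k (2*k)"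
  shows "hconcat AA (- AA) + BB * P_mat k h * CC = Yhat n k h AA BB * Lm k CC"
proof (rule eq_matI)
  have dl: "dim_row (hconcat AA (- AA) + BB * P_mat k h * CC) = n"
           "dim_col (hconcat AA (- AA) + BB * P_mat k h * CC) = 2*k"
    using CC BB by (auto simp: P_mat_def)
  show "dim_row (hconcat AA (- AA) + BB * P_mat k h * CC) = dim_row (Yhat n k h AA BB * Lm k CC)"
    using dl by (simp add: Yhat_def)
  show "dim_col (hconcat AA (- AA) + BB * P_mat k h * CC) = dim_col (Yhat n k h AA BB * Lm k CC)"
    using dl by (simp add: Lm_def)
  fix r c assume "r < dim_row (Yhat n k h AA BB * Lm k CC)" "c < dim_col (Yhat n k h AA BB * Lm k CC)"
  then have r: "r < n" and c: "c < 2*k" by (auto simp: Yhat_def Lm_def)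
  have BP: "BB * P_mat k h \<in> carrier_mat n k" using BB by (simp add: P_mat_def)
  have lhs1: "hconcat AA (- AA) $$ (r,c) = (if c < k then AA $$ (r,c) else - AA $$ (r, c - k))"
    using AA r c by (auto simp: hconcat_def)
  have lhs2: "(BB * P_mat k h * CC) $$ (r,c) = (\<Sum>t\<in>{0..<k}. (if t < h then BB $$ (r, t) else 0) * CC $$ (t, c))"
  proof -
    have "(BB * P_mat k h * CC) $$ (r,c) = (\<Sum>t\<in>{0..<k}. (BB * P_mat k h) $$ (r, t) * CC $$ (t, c))"
    proof -
      have "dim_row (BB * P_mat k h) = n" "dim_col (BB * P_mat k h) = k" "dim_col CC = 2*k" "dim_row CC = k" using BP CC by auto
      then show ?thesis using r c by (auto simp add: scalar_prod_def intro!: sum.cong)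
    qed
    also have "\<dots> = (\<Sum>t\<in>{0..<k}. (if t < h then BB $$ (r, t) else 0) * CC $$ (t, c))"
      by (rule sum.cong) (use BP_index[OF BB r] in auto)
    finally show ?thesis .
  qed
  have "(Yhat n k h AA BB * Lm k CC) $$ (r,c) = (\<Sum>q\<in>{0..<2*k}. Yhat n k h AA BB $$ (r,q) * Lm k CC $$ (q,c))"
    using r c by (simp add: scalar_prod_def Yhat_def Lm_def)
  also have "\<dots> = (\<Sum>q\<in>{0..<k}. Yhat n k h AA BB $$ (r,q) * Lm k CC $$ (q,c))
      + (\<Sum>t\<in>{0..<k}. Yhat n k h AA BB $$ (r,t+k) * Lm k CC $$ (t+k,c))"
    by (rule sum_split2k)
  also have "(\<Sum>q\<in>{0..<k}. Yhat n k h AA BB $$ (r,q) * Lm k CC $$ (q,c))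
      = (if c < k then AA $$ (r,c) else - AA $$ (r, c - k))"
  proof -
    have "(\<Sum>q\<in>{0..<k}. Yhat n k h AA BB $$ (r,q) * Lm k CC $$ (q,c))
       = (\<Sum>q\<in>{0..<k}. if (if c < k then c else c - k) = q then (if c < k then AA $$ (r,c) else - AA $$ (r, c - k)) else 0)"
      by (rule sum.cong) (use r c in \<open>auto simp: Yhat_def Lm_def\<close>)
    also have "\<dots> = (if c < k then AA $$ (r,c) else - AA $$ (r, c - k))"
      using c by (simp only: sum.delta' finite_atLeastLessThan) auto
    finally show ?thesis .
  qed
  also have "(\<Sum>t\<in>{0..<k}. Yhat n k h AA BB $$ (r,t+k) * Lm k CC $$ (t+k,c))
      = (\<Sum>t\<in>{0..<k}. (if t < h then BB $$ (r, t) else 0) * CC $$ (t, c))"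
    by (rule sum.cong) (use r c in \<open>auto simp: Yhat_def Lm_def\<close>)
  finally show "(hconcat AA (- AA) + BB * P_mat k h * CC) $$ (r, c) = (Yhat n k h AA BB * Lm k CC) $$ (r, c)"
    using lhs1 lhs2 r c dl by simp
qed


definition Cw :: "nat \<Rightarrow> complex mat" where
  "Cw k = mat k (2*k) (\<lambda>(r,c). if c = r + k then 1 else 0)"

definition Zm :: "nat \<Rightarrow> nat \<Rightarrow> complex mat \<Rightarrow> complex mat \<Rightarrow> complex mat" where
  "Zm n k AA BB = mat n n (\<lambda>(r,c). if c < k then AA $$ (r,c) else BB $$ (r, c - k))"

lemma Cw_dims[simp]: "dim_row (Cw k) = k" "dim_col (Cw k) = 2*k" by (simp_all add: Cw_def)
lemma Zm_dims[simp]: "dim_row (Zm n k AA BB) = n" "dim_col (Zm n k AA BB) = n" by (simp_all add: Zm_def)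
lemma Cw_carrier[simp]: "Cw k \<in> carrier_mat k (2*k)" by (simp add: Cw_def)
lemma Zm_carrier[simp]: "Zm n k AA BB \<in> carrier_mat n n" by (simp add: Zm_def)

lemma CC_factor: assumes CC: "CC \<in> carrier_mat k (2*k)"
  shows "CC = Cw k * Lm k CC"
proof (rule eq_matI)
  fix r c assume "r < dim_row (Cw k * Lm k CC)" "c < dim_col (Cw k * Lm k CC)"
  then have r: "r < k" and c: "c < 2*k" by (auto simp: Cw_def Lm_def)
  have "(Cw k * Lm k CC) $$ (r,c) = (\<Sum>q\<in>{0..<2*k}. (if q = r + k then 1 else 0) * Lm k CC $$ (q, c))"
    using r c by (simp add: scalar_prod_def Cw_def)
  also have "\<dots> = (\<Sum>q\<in>{0..<2*k}. if r + k = q then Lm k CC $$ (q, c) else 0)"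
    by (rule sum.cong) auto
  also have "\<dots> = Lm k CC $$ (r + k, c)" using r by (simp add: sum.delta')
  also have "\<dots> = CC $$ (r, c)" using r c by (simp add: Lm_def)
  finally show "CC $$ (r, c) = (Cw k * Lm k CC) $$ (r, c)" by simp
qed (use CC in \<open>auto simp: Cw_def Lm_def\<close>)

lemma Yhat_T: assumes "n \<le> k + h" "n \<le> 2*k"
  shows "Yhat n k h AA BB * Tm (2*k) n = Zm n k AA BB"
proof (rule eq_matI)
  fix r c assume "r < dim_row (Zm n k AA BB)" "c < dim_col (Zm n k AA BB)"
  then have r: "r < n" and c: "c < n" by (auto simp: Zm_def)
  have "(Yhat n k h AA BB * Tm (2*k) n) $$ (r,c) = (\<Sum>q\<in>{0..<2*k}. Yhat n k h AA BB $$ (r, q) * (if q = c then 1 else 0))"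
    using r c by (simp add: Yhat_def Tm_def scalar_prod_def)
  also have "\<dots> = (if c < 2*k then Yhat n k h AA BB $$ (r, c) else 0)" by (rule sum_ind')
  also have "\<dots> = Zm n k AA BB $$ (r,c)" using r c assms by (auto simp: Yhat_def Zm_def)
  finally show "(Yhat n k h AA BB * Tm (2*k) n) $$ (r,c) = Zm n k AA BB $$ (r,c)" .
qed (auto simp: Zm_def Yhat_def)

lemma YJ_index: assumes Y: "Y \<in> carrier_mat n N" and r: "r < n" and c: "c < d" and p: "pos c < N"
  shows "(Y * Jm N d pos) $$ (r,c) = Y $$ (r, pos c)"
proof -
  have "(Y * Jm N d pos) $$ (r,c) = (\<Sum>q\<in>{0..<N}. Y $$ (r, q) * (if q = pos c then 1 else 0))"
    using Y r c by (simp add: Jm_def scalar_prod_def)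
  also have "\<dots> = Y $$ (r, pos c)" using p by (simp add: sum_ind')
  finally show ?thesis .
qed

lemma PCw_index: assumes X: "X \<in> carrier_mat (2*k) p" and r: "r < k" and c: "c < p"
  shows "(P_mat2 k j i * Cw k * X) $$ (r,c) = (if j \<le> r \<and> r < i then X $$ (r + k, c) else 0)"
proof -
  have PC: "P_mat2 k j i * Cw k = mat k (2*k) (\<lambda>(r,q). if j \<le> r \<and> r < i \<and> q = r + k then 1 else 0)"
  proof (rule eq_matI)
    fix r q assume "r < dim_row (mat k (2*k) (\<lambda>(r,q). if j \<le> r \<and> r < i \<and> q = r + k then 1 else (0::complex)))"
      "q < dim_col (mat k (2*k) (\<lambda>(r,q). if j \<le> r \<and> r < i \<and> q = r + k then 1 else (0::complex)))"
    then have r: "r < k" and q: "q < 2*k" by auto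
    have "(P_mat2 k j i * Cw k) $$ (r,q) = (\<Sum>s\<in>{0..<k}. (if r = s \<and> j \<le> r \<and> r < i then 1 else 0) * Cw k $$ (s, q))"
      using r q by (simp add: P_mat2_def Cw_def scalar_prod_def)
    also have "\<dots> = (\<Sum>s\<in>{0..<k}. if r = s then (if j \<le> r \<and> r < i then Cw k $$ (r, q) else 0) else 0)"
      by (rule sum.cong) auto
    also have "\<dots> = (if j \<le> r \<and> r < i then Cw k $$ (r, q) else 0)" using r by (simp add: sum.delta')
    also have "\<dots> = (if j \<le> r \<and> r < i \<and> q = r + k then 1 else 0)" using r q by (simp add: Cw_def)
    finally show "(P_mat2 k j i * Cw k) $$ (r,q) = mat k (2*k) (\<lambda>(r,q). if j \<le> r \<and> r < i \<and> q = r + k then 1 else (0::complex)) $$ (r,q)"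
      using r q by simp
  qed (auto simp: P_mat2_def Cw_def)
  have "(P_mat2 k j i * Cw k * X) $$ (r,c) = (\<Sum>q\<in>{0..<2*k}. (if j \<le> r \<and> r < i \<and> q = r + k then 1 else 0) * X $$ (q, c))"
    unfolding PC using X r c by (simp add: scalar_prod_def)
  also have "\<dots> = (\<Sum>q\<in>{0..<2*k}. if r + k = q then (if j \<le> r \<and> r < i then X $$ (q, c) else 0) else 0)"
    by (rule sum.cong) auto
  also have "\<dots> = (if j \<le> r \<and> r < i then X $$ (r + k, c) else 0)" using r by (simp add: sum.delta')
  finally show ?thesis .
qed

definition posf :: "nat \<Rightarrow> nat \<Rightarrow> nat \<Rightarrow> nat \<Rightarrow> nat \<Rightarrow> nat" where
  "posf n k i j c = (if c < (k + j - n) + (k - i) then (if c < k + j - n then n + c else c + n + (i - j))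
      else k + j + (c - ((k + j - n) + (k - i))))"

lemma posf_inj: assumes "n \<le> k + j" "j < i" "i \<le> k"
  shows "inj_on (posf n k i j) {0..<2*k - n}"
  using assms by (intro inj_onI) (auto simp: posf_def split: if_splits)

lemma posf_img: assumes "n \<le> k + j" "j < i" "i \<le> k"
  shows "posf n k i j ` {0..<2*k - n} = {n..<2*k}"
proof
  show "posf n k i j ` {0..<2*k - n} \<subseteq> {n..<2*k}"
    using assms by (auto simp: posf_def)
  show "{n..<2*k} \<subseteq> posf n k i j ` {0..<2*k - n}"
  proof
    fix q assume q: "q \<in> {n..<2*k}"
    show "q \<in> posf n k i j ` {0..<2*k - n}"
    proof (cases "q < k + j")
      case True
      then show ?thesis using q assms
        by (intro rev_image_eqI[of "q - n"]) (auto simp: posf_def)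
    next
      case False
      show ?thesis
      proof (cases "q < k + i")
        case True
        then show ?thesis using q assms False
          by (intro rev_image_eqI[of "(k + j - n) + (k - i) + (q - k - j)"]) (auto simp: posf_def)
      next
        case False2: False
        then show ?thesis using q assms False
          by (intro rev_image_eqI[of "q - n - (i - j)"]) (auto simp: posf_def)
      qed
    qed
  qed
qed


lemma core:
  fixes AA BB CC Li Zinv :: "complex mat"
  assumes AA: "AA \<in> carrier_mat n k" and BB: "BB \<in> carrier_mat n k" and CC: "CC \<in> carrier_mat k (2*k)"
    and Li: "Li \<in> carrier_mat (2*k) (2*k)" and LLi: "Lm k CC * Li = 1\<^sub>m (2*k)" and LiL: "Li * Lm k CC = 1\<^sub>m (2*k)"
    and Zi: "Zinv \<in> carrier_mat n n" and Z1: "Zinv * Zm n k AA BB = 1\<^sub>m n" and Z2: "Zm n k AA BB * Zinv = 1\<^sub>m n"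
    and nj: "n \<le> k + j" and ji: "j < i" and ik: "i \<le> k"
  shows "\<exists>E F G. E \<in> carrier_mat (2*k) (2*k - n - (i - j)) \<and> F \<in> carrier_mat (2*k) (i - j) \<and>
     G \<in> carrier_mat (2*k) (i - j) \<and>
     null_basis (hconcat AA (-AA) + BB * P_mat k i * CC) (hconcat E F) \<and>
     null_basis (hconcat AA (-AA) + BB * P_mat k j * CC) (hconcat E G) \<and>
     P_mat2 k j i * CC * F = id_block k j i \<and> P_mat2 k j i * CC * G = id_block k j i"
proof -
  define d where "d = 2*k - n"
  define dE where "dE = d - (i - j)"
  define pos where "pos = posf n k i j"
  define J where "J = Jm (2*k) d pos"
  define T where "T = Tm (2*k) n"
  define W where "W h = Zinv * (Yhat n k h AA BB * J)" for h
  define Mf where "Mf h = J - T * W h" for h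
  have J: "J \<in> carrier_mat (2*k) d" unfolding J_def by simp
  have T: "T \<in> carrier_mat (2*k) n" unfolding T_def by simp
  have W: "W h \<in> carrier_mat n d" for h unfolding W_def using Zi J by auto
  have TW: "T * W h \<in> carrier_mat (2*k) d" for h using T W by auto
  have Mf: "Mf h \<in> carrier_mat (2*k) d" for h unfolding Mf_def by (rule minus_carrier_mat[OF TW])
  have Mfd: "dim_row (Mf h) = 2*k" "dim_col (Mf h) = d" for h using Mf[of h] by auto
  have injp: "inj_on pos {0..<d}" using posf_inj[OF nj ji ik] unfolding pos_def d_def .
  have imp: "pos ` {0..<d} = {n..<2*k}" using posf_img[OF nj ji ik] unfolding pos_def d_def .
  have dEd: "dE + (i - j) = d" using nj ji ik unfolding dE_def d_def by simp
  have h1: "(k + j - n) + (k - i) = dE" unfolding dE_def d_def using nj ji ik by simp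
  have posdE: "pos (dE + c) = k + j + c" if "c < i - j" for c
    unfolding pos_def posf_def h1 by simp
  have posE: "\<not> (k + j \<le> pos c \<and> pos c < k + i)" if "c < dE" for c
    using that nj ji ik by (auto simp: pos_def posf_def dE_def d_def)
  have posN: "pos c < 2*k" "n \<le> pos c" if "c < d" for c using imp that by auto
  have kerh: "null_basis (Yhat n k h AA BB) (Mf h)" if "j \<le> h" "h \<le> k" for h
  proof -
    have YT: "Yhat n k h AA BB * Tm (2*k) n = Zm n k AA BB"
      by (rule Yhat_T) (use that nj in auto)
    show ?thesis unfolding Mf_def W_def J_def T_def
      by (rule kernel_free[OF Yhat_carrier Zi YT Z1 Z2 injp imp])
  qed
  have nbY: "null_basis (hconcat AA (-AA) + BB * P_mat k h * CC) (Li * Mf h)" if "j \<le> h" "h \<le> k" for h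
    unfolding Y_factor[OF AA BB CC]
    by (rule null_basis_transfer[OF Yhat_carrier Lm_carrier Li LLi LiL kerh[OF that]])
  have Mf_index: "Mf h $$ (r,c) = (if r = pos c then 1 else 0) - (if r < n then W h $$ (r,c) else 0)"
    if "r < 2*k" "c < d" for h r c
  proof -
    have dm: "dim_row (T * W h) = 2*k" "dim_col (T * W h) = d" using TW[of h] by auto
    have "Mf h $$ (r,c) = J $$ (r,c) - (T * W h) $$ (r,c)" unfolding Mf_def using that dm by simp
    also have "(T * W h) $$ (r,c) = (if r < n then W h $$ (r,c) else 0)"
      unfolding T_def by (rule Tm_mult_mat[OF W that(1) that(2)])
    finally show ?thesis using that by (simp add: J_def Jm_def)
  qed
  have W_eq: "W i $$ (r,c) = W j $$ (r,c)" if r: "r < n" and c: "c < dE" for r c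
  proof -
    have cd: "c < d" using c dEd by simp
    have "col (Yhat n k i AA BB * J) c = col (Yhat n k j AA BB * J) c"
    proof (rule eq_vecI)
      fix q assume "q < dim_vec (col (Yhat n k j AA BB * J) c)"
      then have q: "q < n" by simp
      have "(Yhat n k i AA BB * J) $$ (q,c) = (Yhat n k j AA BB * J) $$ (q,c)"
      proof -
        have e: "(Yhat n k h AA BB * J) $$ (q,c) = Yhat n k h AA BB $$ (q, pos c)" for h
          unfolding J_def by (rule YJ_index[where pos=pos]) (use q cd posN in auto)
        show ?thesis unfolding e
          using posE[OF c] posN[OF cd] q ji by (auto simp: Yhat_def)
      qed
      then show "col (Yhat n k i AA BB * J) c $ q = col (Yhat n k j AA BB * J) c $ q"
        using q cd J by simp
    qed simp
    then show ?thesis unfolding W_def using r cd Zi J by simp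
  qed
  define Eh where "Eh = mat (2*k) dE (\<lambda>(r,c). Mf i $$ (r,c))"
  define Fh where "Fh h = mat (2*k) (i - j) (\<lambda>(r,c). Mf h $$ (r, dE + c))" for h
  have Eh: "Eh \<in> carrier_mat (2*k) dE" unfolding Eh_def by simp
  have Fh: "Fh h \<in> carrier_mat (2*k) (i - j)" for h unfolding Fh_def by simp
  have hEF: "hconcat Eh (Fh h) = Mf h" if "h = i \<or> h = j" for h
  proof (rule eq_matI)
    fix r c assume "r < dim_row (Mf h)" "c < dim_col (Mf h)"
    then have r: "r < 2*k" and c: "c < d" using Mfd by auto
    show "hconcat Eh (Fh h) $$ (r,c) = Mf h $$ (r,c)"
    proof (cases "c < dE")
      case True
      have "Mf i $$ (r,c) = Mf h $$ (r,c)"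
        using that Mf_index[OF r c] W_eq[OF _ True] by auto
      then show ?thesis using True r c by (simp add: hconcat_def Eh_def Fh_def)
    next
      case False
      then show ?thesis using r c dEd by (simp add: hconcat_def Eh_def Fh_def)
    qed
  qed (use Mfd dEd in \<open>auto simp: hconcat_def Eh_def Fh_def\<close>)
  have Pid: "P_mat2 k j i * CC * (Li * Fh h) = id_block k j i" for h
  proof -
    have P: "P_mat2 k j i \<in> carrier_mat k k" by (simp add: P_mat2_def)
    have PCw: "P_mat2 k j i * Cw k \<in> carrier_mat k (2*k)" using P by simp
    have "P_mat2 k j i * CC * (Li * Fh h) = (P_mat2 k j i * Cw k) * Lm k CC * (Li * Fh h)"
      using CC_factor[OF CC] assoc_mult_mat[OF P Cw_carrier Lm_carrier] by simp
    also have "\<dots> = (P_mat2 k j i * Cw k) * (Lm k CC * (Li * Fh h))"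
      using assoc_mult_mat[OF PCw Lm_carrier, of "Li * Fh h" "i - j"] Li Fh by simp
    also have "Lm k CC * (Li * Fh h) = Fh h"
      using assoc_mult_mat[OF Lm_carrier Li Fh[of h], symmetric] LLi left_mult_one_mat[OF Fh[of h]] by simp
    finally have eq: "P_mat2 k j i * CC * (Li * Fh h) = P_mat2 k j i * Cw k * Fh h" .
    show ?thesis unfolding eq
    proof (rule eq_matI)
      fix r c assume "r < dim_row (id_block k j i)" "c < dim_col (id_block k j i)"
      then have r: "r < k" and c: "c < i - j" by (auto simp: id_block_def)
      have cd: "dE + c < d" using c dEd by simp
      show "(P_mat2 k j i * Cw k * Fh h) $$ (r,c) = id_block k j i $$ (r,c)"
        unfolding PCw_index[OF Fh r c]
        using r c Mf_index[OF _ cd, of "r + k" h] posdE[OF c] nj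
        by (auto simp: Fh_def id_block_def)
    qed (auto simp: id_block_def P_mat2_def Fh_def)
  qed
  have dd: "2*k - n - (i - j) = dE" unfolding dE_def d_def by simp
  show ?thesis
  proof (intro exI conjI)
    show "Li * Eh \<in> carrier_mat (2*k) (2*k - n - (i - j))" unfolding dd using Li Eh by simp
    show "Li * Fh i \<in> carrier_mat (2*k) (i - j)" using Li Fh by simp
    show "Li * Fh j \<in> carrier_mat (2*k) (i - j)" using Li Fh by simp
    show "null_basis (hconcat AA (-AA) + BB * P_mat k i * CC) (hconcat (Li * Eh) (Li * Fh i))"
      unfolding hconcat_mult[OF Li Eh Fh, symmetric] hEF[of i, OF disjI1[OF refl]]
      using nbY[of i] ji ik by simp
    show "null_basis (hconcat AA (-AA) + BB * P_mat k j * CC) (hconcat (Li * Eh) (Li * Fh j))"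
      unfolding hconcat_mult[OF Li Eh Fh, symmetric] hEF[of j, OF disjI2[OF refl]]
      using nbY[of j] ji ik by simp
    show "P_mat2 k j i * CC * (Li * Fh i) = id_block k j i" by (rule Pid)
    show "P_mat2 k j i * CC * (Li * Fh j) = id_block k j i" by (rule Pid)
  qed
qed


lemma inv_from_det:
  fixes A :: "complex mat"
  assumes A: "A \<in> carrier_mat n n" and d: "det A \<noteq> 0"
  shows "\<exists>B. B \<in> carrier_mat n n \<and> B * A = 1\<^sub>m n \<and> A * B = 1\<^sub>m n"
proof -
  from det_non_zero_imp_unit[OF A d, unfolded Units_def, of "()"]
  obtain B where B: "B \<in> carrier_mat n n" and BA: "B * A = 1\<^sub>m n" and AB: "A * B = 1\<^sub>m n"
    by (auto simp: ring_mat_def)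
  then show ?thesis by blast
qed

definition idx :: "nat \<Rightarrow> nat \<Rightarrow> nat \<Rightarrow> nat" where
  "idx t r c = prod_encode (t, prod_encode (r, c))"

lemma coords3_idx:
  "r < dim_row M1 \<Longrightarrow> c < dim_col M1 \<Longrightarrow> coords3 M1 M2 M3 (idx 0 r c) = M1 $$ (r,c)"
  "r < dim_row M2 \<Longrightarrow> c < dim_col M2 \<Longrightarrow> coords3 M1 M2 M3 (idx 1 r c) = M2 $$ (r,c)"
  "r < dim_row M3 \<Longrightarrow> c < dim_col M3 \<Longrightarrow> coords3 M1 M2 M3 (idx 2 r c) = M3 $$ (r,c)"
  by (simp_all add: coords3_def mcoord_def idx_def)

definition LmX :: "nat \<Rightarrow> (nat \<Rightarrow> complex) \<Rightarrow> complex mat" where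
  "LmX k x = mat (2*k) (2*k) (\<lambda>(r,c). if r < k then (if c = r then 1 else if c = r + k then -1 else 0)
      else x (idx 2 (r - k) c))"

definition ZmX :: "nat \<Rightarrow> nat \<Rightarrow> (nat \<Rightarrow> complex) \<Rightarrow> complex mat" where
  "ZmX n k x = mat n n (\<lambda>(r,c). if c < k then x (idx 0 r c) else x (idx 1 r (c - k)))"

lemma LmX_eq: assumes CC: "CC \<in> carrier_mat k (2*k)"
  shows "LmX k (coords3 AA BB CC) = Lm k CC"
  by (rule eq_matI) (use CC in \<open>auto simp: LmX_def Lm_def coords3_idx\<close>)

lemma ZmX_eq: assumes AA: "AA \<in> carrier_mat n k" and BB: "BB \<in> carrier_mat n k" and nk: "n \<le> 2*k"
  shows "ZmX n k (coords3 AA BB CC) = Zm n k AA BB"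
proof (rule eq_matI)
  fix i j assume "i < dim_row (Zm n k AA BB)" "j < dim_col (Zm n k AA BB)"
  then have i: "i < n" and j: "j < n" by auto
  show "ZmX n k (coords3 AA BB CC) $$ (i, j) = Zm n k AA BB $$ (i, j)"
  proof (cases "j < k")
    case True then show ?thesis using i j AA coords3_idx(1)[of i AA j BB CC] by (simp add: ZmX_def Zm_def)
  next
    case False then show ?thesis using i j BB nk coords3_idx(2)[of i BB "j - k" AA CC] by (simp add: ZmX_def Zm_def)
  qed
qed (auto simp: ZmX_def)

lemma pf_LmX: "poly_fun (\<lambda>x. det (LmX k x))"
  unfolding LmX_def
proof (rule pf_det)
  fix i j assume "i < 2*k" "j < 2*k"
  show "poly_fun (\<lambda>x. if i < k then (if j = i then 1 else if j = i + k then -1 else 0) else x (idx 2 (i - k) j))"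
    by (cases "i < k") (simp_all add: pf_const pf_var)
qed

lemma pf_ZmX: "poly_fun (\<lambda>x. det (ZmX n k x))"
  unfolding ZmX_def
proof (rule pf_det)
  fix i j assume "i < n" "j < n"
  show "poly_fun (\<lambda>x. if j < k then x (idx 0 i j) else x (idx 1 i (j - k)))"
    by (cases "j < k") (simp_all add: pf_const pf_var)
qed

lemma det_Lm_Cw: "det (Lm k (Cw k)) = 1"
proof -
  have ut: "upper_triangular (Lm k (Cw k))"
    unfolding upper_triangular_def by (auto simp: Lm_def Cw_def)
  have "det (Lm k (Cw k)) = prod_list (diag_mat (Lm k (Cw k)))"
    by (rule det_upper_triangular[OF ut Lm_carrier])
  also have "\<dots> = (\<Prod>i = 0 ..< 2*k. Lm k (Cw k) $$ (i,i))" by (simp add: prod_list_diag_prod)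
  also have "\<dots> = (\<Prod>i = 0 ..< 2*k. 1)"
    by (rule prod.cong) (auto simp: Lm_def Cw_def)
  finally show ?thesis by simp
qed

lemma Zm_wit: assumes "n \<le> 2*k"
  shows "Zm n k (mat n k (\<lambda>(r,c). if r = c then 1 else 0)) (mat n k (\<lambda>(r,c). if r = c + k then 1 else 0)) = 1\<^sub>m n"
  by (rule eq_matI) (use assms in \<open>auto simp: Zm_def\<close>)

theorem lemma2p2:
  fixes k a b :: nat and A B :: "complex vec set" and hstar h0 :: int
  assumes "k \<ge> 1"
    and "irreducible_alg k A" and "irreducible_alg k B"
    and "alg_dim k A = int a" and "alg_dim k B = int b" and "a \<ge> b"
    and "int b \<ge> hstar" and "hstar > alg_dim k (A \<inter> B)"
    and "max (int a + int b - int k) 0 \<le> h0"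
    and "\<forall>Z. irr_component k (A \<inter> B) Z \<longrightarrow> h0 \<le> alg_dim k Z"
  shows "generic3 (a + b) k (a + b) k k (2 * k)
     (\<lambda>AA BB CC. \<forall>i j :: nat. h0 \<le> int j \<and> j < i \<and> int i \<le> hstar \<longrightarrow>
        (let Abf = hconcat AA (- AA);
             Y = (\<lambda>h. Abf + BB * P_mat k h * CC);
             m = 2 * k - a - b
         in \<exists>E F G. E \<in> carrier_mat (2 * k) (m - (i - j)) \<and>
                   F \<in> carrier_mat (2 * k) (i - j) \<and> G \<in> carrier_mat (2 * k) (i - j) \<and>
                   null_basis (Y i) (hconcat E F) \<and>
                   null_basis (Y j) (hconcat E G) \<and>
                   P_mat2 k j i * CC * F = id_block k j i \<and>
                   P_mat2 k j i * CC * G = id_block k j i))"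
proof (cases "\<exists>i j::nat. h0 \<le> int j \<and> j < i \<and> int i \<le> hstar")
  case False
  show ?thesis unfolding generic3_def
  proof (intro exI[of _ "\<lambda>x. 1"] conjI)
    show "poly_fun (\<lambda>x. 1)" by (rule pf_const)
    show "\<exists>M1\<in>carrier_mat (a + b) k. \<exists>M2\<in>carrier_mat (a + b) k. \<exists>M3\<in>carrier_mat k (2 * k).
          (\<lambda>x. 1::complex) (coords3 M1 M2 M3) \<noteq> 0"
      by (intro bexI[of _ "0\<^sub>m (a+b) k"] bexI[of _ "0\<^sub>m k (2*k)"] zero_carrier_mat) simp
    show "\<forall>M1\<in>carrier_mat (a + b) k. \<forall>M2\<in>carrier_mat (a + b) k. \<forall>M3\<in>carrier_mat k (2 * k).
          (\<lambda>x. 1::complex) (coords3 M1 M2 M3) \<noteq> 0 \<longrightarrow>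
          (\<forall>i j. h0 \<le> int j \<and> j < i \<and> int i \<le> hstar \<longrightarrow>
            (let Abf = hconcat M1 (- M1); Y = \<lambda>h. Abf + M2 * P_mat k h * M3; m = 2 * k - a - b
             in \<exists>E F G. E \<in> carrier_mat (2 * k) (m - (i - j)) \<and> F \<in> carrier_mat (2 * k) (i - j) \<and>
                   G \<in> carrier_mat (2 * k) (i - j) \<and> null_basis (Y i) (hconcat E F) \<and>
                   null_basis (Y j) (hconcat E G) \<and> P_mat2 k j i * M3 * F = id_block k j i \<and>
                   P_mat2 k j i * M3 * G = id_block k j i))"
      using False by blast
  qed
next
  case True
  then obtain i0 j0 :: nat where ij0: "h0 \<le> int j0" "j0 < i0" "int i0 \<le> hstar" by blast
  define n where "n = a + b"
  have n2k: "n \<le> 2*k" using ij0 assms(6,7,9) unfolding n_def by linarith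
  define p where "p = (\<lambda>x. det (LmX k x) * det (ZmX n k x))"
  show ?thesis unfolding generic3_def
  proof (intro exI[of _ p] conjI)
    show "poly_fun p" unfolding p_def by (rule pf_mul[OF pf_LmX pf_ZmX])
    define AA0 :: "complex mat" where "AA0 = mat n k (\<lambda>(r,c). if r = c then 1 else 0)"
    define BB0 :: "complex mat" where "BB0 = mat n k (\<lambda>(r,c). if r = c + k then 1 else 0)"
    have AA0c: "AA0 \<in> carrier_mat n k" and BB0c: "BB0 \<in> carrier_mat n k" by (simp_all add: AA0_def BB0_def)
    have "p (coords3 AA0 BB0 (Cw k)) = 1"
      unfolding p_def LmX_eq[OF Cw_carrier] ZmX_eq[OF AA0c BB0c n2k] unfolding AA0_def BB0_def
      using Zm_wit[OF n2k] det_Lm_Cw by simp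
    then show "\<exists>M1\<in>carrier_mat (a + b) k. \<exists>M2\<in>carrier_mat (a + b) k. \<exists>M3\<in>carrier_mat k (2 * k).
          p (coords3 M1 M2 M3) \<noteq> 0"
      unfolding n_def[symmetric]
      by (intro bexI[of _ AA0] bexI[of _ BB0] bexI[of _ "Cw k"]) (auto simp: AA0_def BB0_def)
    show "\<forall>M1\<in>carrier_mat (a + b) k. \<forall>M2\<in>carrier_mat (a + b) k. \<forall>M3\<in>carrier_mat k (2 * k).
          p (coords3 M1 M2 M3) \<noteq> 0 \<longrightarrow>
          (\<forall>i j. h0 \<le> int j \<and> j < i \<and> int i \<le> hstar \<longrightarrow>
            (let Abf = hconcat M1 (- M1); Y = \<lambda>h. Abf + M2 * P_mat k h * M3; m = 2 * k - a - b
             in \<exists>E F G. E \<in> carrier_mat (2 * k) (m - (i - j)) \<and> F \<in> carrier_mat (2 * k) (i - j) \<and>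
                   G \<in> carrier_mat (2 * k) (i - j) \<and> null_basis (Y i) (hconcat E F) \<and>
                   null_basis (Y j) (hconcat E G) \<and> P_mat2 k j i * M3 * F = id_block k j i \<and>
                   P_mat2 k j i * M3 * G = id_block k j i))"
    proof (intro ballI impI allI)
      fix AA BB CC i j
      assume AA: "AA \<in> carrier_mat (a + b) k" and BB: "BB \<in> carrier_mat (a + b) k"
        and CC: "CC \<in> carrier_mat k (2 * k)" and pnz: "p (coords3 AA BB CC) \<noteq> 0"
        and ij: "h0 \<le> int j \<and> j < i \<and> int i \<le> hstar"
      have AA': "AA \<in> carrier_mat n k" and BB': "BB \<in> carrier_mat n k" using AA BB n_def by auto
      have dets: "det (Lm k CC) \<noteq> 0" "det (Zm n k AA BB) \<noteq> 0"
        using pnz unfolding p_def LmX_eq[OF CC] ZmX_eq[OF AA' BB' n2k] by auto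
      obtain Li where Li: "Li \<in> carrier_mat (2*k) (2*k)" "Li * Lm k CC = 1\<^sub>m (2*k)" "Lm k CC * Li = 1\<^sub>m (2*k)"
        using inv_from_det[OF Lm_carrier dets(1)] by blast
      obtain Zinv where Zi: "Zinv \<in> carrier_mat n n" "Zinv * Zm n k AA BB = 1\<^sub>m n" "Zm n k AA BB * Zinv = 1\<^sub>m n"
        using inv_from_det[OF Zm_carrier dets(2)] by blast
      have nj: "n \<le> k + j" and ji: "j < i" and ik: "i \<le> k"
        using ij assms(6,7,9) unfolding n_def by linarith+
      have mm: "2 * k - a - b = 2*k - n" unfolding n_def by simp
      show "let Abf = hconcat AA (- AA); Y = \<lambda>h. Abf + BB * P_mat k h * CC; m = 2 * k - a - b
             in \<exists>E F G. E \<in> carrier_mat (2 * k) (m - (i - j)) \<and> F \<in> carrier_mat (2 * k) (i - j) \<and>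
                   G \<in> carrier_mat (2 * k) (i - j) \<and> null_basis (Y i) (hconcat E F) \<and>
                   null_basis (Y j) (hconcat E G) \<and> P_mat2 k j i * CC * F = id_block k j i \<and>
                   P_mat2 k j i * CC * G = id_block k j i"
        unfolding Let_def mm
        by (rule core[OF AA' BB' CC Li(1) Li(3) Li(2) Zi(1) Zi(2) Zi(3) nj ji ik])
    qed
  qed
qed

end
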